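(* Let $V$ be a complex vector space of finite dimension $N$ and let $(R,F)$ be a couple of compatible braidings on $V\otimes V$. Put $\mathcal{R}=R\,F$. Then for any $N\times N$ matrix $A$ (with entries in $\mathbb{C}$ or in any associative $\mathbb{C}$-algebra, the braidings acting on the numerical tensor factors) $$\mathcal{R}_{12}\,A_{\overline 3}=A_{\overline 3}\,\mathcal{R}_{12},$$ where $\mathcal{R}_{12}=R_{12}F_{12}$ and $A_{\overline 3}=F_{23}F_{12}A_1F_{12}^{-1}F_{23}^{-1}$.
   Context: A braiding is an invertible operator $R\in\mathrm{End}(V\otimes V)$ satisfying $(R\otimes I)(I\otimes R)(R\otimes I)=(I\otimes R)(R\otimes I)(I\otimes R)$. In $\mathrm{End}(V^{\otimes 3})$, $X_{12}=X\otimes I$, $X_{23}=I\otimes X$ for $X\in\mathrm{End}(V\otimes V)$, and $A_1=A\otimes I\otimes I$ for an $N\times N$ matrix $A$. Braidings $R,F$ are compatible if $R_{12}F_{23}F_{12}=F_{23}F_{12}R_{23}$ and $R_{23}F_{12}F_{23}=F_{12}F_{23}R_{12}$. *)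

theory Defs
  imports "HOL-Analysis.Analysis"
begin

text \<open>V = C^N with basis indexed by the finite type 'n (N = CARD('n)).
  Endomorphisms of V (x) V are matrices indexed by 'n \<times> 'n; of V (x) V (x) V
  by 'n \<times> 'n \<times> 'n, the basis vector e_i (x) e_j (x) e_k being (i,j,k).\<close>

definition leg12 :: "'a::semiring_1 ^('n::finite \<times> 'n)^('n \<times> 'n) \<Rightarrow> 'a ^('n \<times> 'n \<times> 'n)^('n \<times> 'n \<times> 'n)" where
  "leg12 X = (\<chi> p q. X $ (fst p, fst (snd p)) $ (fst q, fst (snd q)) * (if snd (snd p) = snd (snd q) then 1 else 0))"

definition leg23 :: "'a::semiring_1 ^('n::finite \<times> 'n)^('n \<times> 'n) \<Rightarrow> 'a ^('n \<times> 'n \<times> 'n)^('n \<times> 'n \<times> 'n)" where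
  "leg23 X = (\<chi> p q. (if fst p = fst q then 1 else 0) * X $ snd p $ snd q)"

definition leg1 :: "'a::semiring_1 ^'n::finite^'n \<Rightarrow> 'a ^('n \<times> 'n \<times> 'n)^('n \<times> 'n \<times> 'n)" where
  "leg1 A = (\<chi> p q. A $ fst p $ fst q * (if snd p = snd q then 1 else 0))"

definition map_mat :: "('a \<Rightarrow> 'b) \<Rightarrow> 'a^'m::finite^'k::finite \<Rightarrow> 'b^'m^'k" where
  "map_mat h M = (\<chi> i j. h (M $ i $ j))"

definition braiding :: "complex ^('n::finite \<times> 'n)^('n \<times> 'n) \<Rightarrow> bool" where
  "braiding R \<longleftrightarrow> invertible R \<and>
     leg12 R ** leg23 R ** leg12 R = leg23 R ** leg12 R ** leg23 R"

definition compatible :: "complex ^('n::finite \<times> 'n)^('n \<times> 'n) \<Rightarrow> complex ^('n \<times> 'n)^('n \<times> 'n) \<Rightarrow> bool" where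
  "compatible R F \<longleftrightarrow>
     leg12 R ** leg23 F ** leg12 F = leg23 F ** leg12 F ** leg23 R \<and>
     leg23 R ** leg12 F ** leg23 F = leg12 F ** leg23 F ** leg12 R"

text \<open>An associative unital C-algebra: a ring 'a with a unital ring homomorphism
  h : C -> 'a whose image is central (scalar multiplication c \<cdot> x = h c * x).\<close>
definition calg_hom :: "(complex \<Rightarrow> 'a::ring_1) \<Rightarrow> bool" where
  "calg_hom h \<longleftrightarrow> h 1 = 1 \<and> (\<forall>x y. h (x + y) = h x + h y) \<and>
     (\<forall>x y. h (x * y) = h x * h y) \<and> (\<forall>c a. h c * a = a * h c)"

end

theory Submission
  imports Defs
begin

lemma sum3: "sum (f :: 'n::finite \<times> 'n \<times> 'n \<Rightarrow> 'a::comm_monoid_add) UNIV = (\<Sum>a\<in>UNIV. \<Sum>b\<in>UNIV. \<Sum>c\<in>UNIV. f (a,b,c))"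
  by (simp add: sum.cartesian_product UNIV_Times_UNIV[symmetric] del: UNIV_Times_UNIV)

lemma sum2: "sum (f :: 'n::finite \<times> 'n \<Rightarrow> 'a::comm_monoid_add) UNIV = (\<Sum>a\<in>UNIV. \<Sum>b\<in>UNIV. f (a,b))"
  by (simp add: sum.cartesian_product UNIV_Times_UNIV[symmetric] del: UNIV_Times_UNIV)

lemma sum_if_const: "(\<Sum>x\<in>S. if P then f x else 0) = (if P then sum f S else 0)"
  by simp

lemma leg12_mul: "leg12 (X ** Y) = leg12 X ** (leg12 Y :: 'a::semiring_1^_^_)"
  unfolding leg12_def matrix_matrix_mult_def
  apply (simp add: vec_eq_iff sum3 sum2 sum_distrib_right)
  apply (auto simp: if_distrib if_distribR sum.delta sum.delta' cong: if_cong)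
  done

lemma leg23_mul: "leg23 (X ** Y) = leg23 X ** (leg23 Y :: 'a::semiring_1^_^_)"
  unfolding leg23_def matrix_matrix_mult_def
  apply (simp add: vec_eq_iff sum3 sum2 sum_distrib_left)
  apply (auto simp: if_distrib if_distribR sum_if_const sum.delta cong: if_cong)
  done

lemma leg12_one: "leg12 (mat 1) = (mat 1 :: 'a::semiring_1^_^_)"
  unfolding leg12_def mat_def by (auto simp: vec_eq_iff prod_eq_iff)

lemma leg23_one: "leg23 (mat 1) = (mat 1 :: 'a::semiring_1^_^_)"
  unfolding leg23_def mat_def by (auto simp: vec_eq_iff prod_eq_iff)

lemma h0: "calg_hom h \<Longrightarrow> h 0 = 0"
  unfolding calg_hom_def by (metis add_cancel_right_right add_0)

lemma hsum: "calg_hom h \<Longrightarrow> h (sum f S) = (\<Sum>x\<in>S. h (f x))"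
proof -
  assume hh: "calg_hom h"
  have add: "\<And>x y. h (x + y) = h x + h y" using hh unfolding calg_hom_def by blast
  show ?thesis
    by (induction S rule: infinite_finite_induct) (simp_all add: h0[OF hh] add)
qed

lemma map_mul: "calg_hom h \<Longrightarrow> map_mat h (X ** Y) = map_mat h X ** map_mat h Y"
proof -
  assume hh: "calg_hom h"
  have mul: "\<And>x y. h (x * y) = h x * h y" using hh unfolding calg_hom_def by blast
  show "map_mat h (X ** Y) = map_mat h X ** map_mat h Y" unfolding map_mat_def matrix_matrix_mult_def by (simp add: vec_eq_iff hsum[OF hh] mul)
qed

lemma comm_leg1:
  assumes hh: "calg_hom h"
  shows "map_mat h (leg23 X) ** leg1 A = leg1 A ** map_mat h (leg23 X)"
proof -
  have z: "h 0 = 0" using h0[OF hh] .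
  have one: "h 1 = 1" using hh unfolding calg_hom_def by blast
  have cen: "\<And>c a. h c * a = a * h c" using hh unfolding calg_hom_def by blast
  show ?thesis
  unfolding vec_eq_iff proof (intro allI)
    fix p r
    have L: "(map_mat h (leg23 X) ** leg1 A) $ p $ r = h (X $ snd p $ snd r) * A $ fst p $ fst r"
    proof -
      have "(map_mat h (leg23 X) ** leg1 A) $ p $ r =
        (\<Sum>q\<in>UNIV. if q = (fst p, snd r) then h (X $ snd p $ snd r) * A $ fst p $ fst r else 0)"
        unfolding map_mat_def matrix_matrix_mult_def leg23_def leg1_def
        apply (simp only: vec_lambda_beta)
        apply (rule sum.cong[OF refl])
        apply (auto simp: z one)
        done
      then show ?thesis by simp
    qed
    have R: "(leg1 A ** map_mat h (leg23 X)) $ p $ r = A $ fst p $ fst r * h (X $ snd p $ snd r)"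
    proof -
      have "(leg1 A ** map_mat h (leg23 X)) $ p $ r =
        (\<Sum>q\<in>UNIV. if q = (fst r, snd p) then A $ fst p $ fst r * h (X $ snd p $ snd r) else 0)"
        unfolding map_mat_def matrix_matrix_mult_def leg23_def leg1_def
        apply (simp only: vec_lambda_beta)
        apply (rule sum.cong[OF refl])
        apply (auto simp: z one)
        done
      then show ?thesis by simp
    qed
    show "(map_mat h (leg23 X) ** leg1 A) $ p $ r = (leg1 A ** map_mat h (leg23 X)) $ p $ r"
      using L R cen by simp
  qed
qed

lemma inv_props: "invertible F \<Longrightarrow> F ** matrix_inv F = mat 1 \<and> matrix_inv F ** F = mat 1"
  unfolding invertible_def matrix_inv_def by (rule someI_ex)

theorem mainTheorem3:
  fixes R F :: "complex ^('n::finite \<times> 'n)^('n \<times> 'n)"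
    and A :: "'a::ring_1 ^'n^'n"
    and h :: "complex \<Rightarrow> 'a"
  assumes "braiding R" and "braiding F" and "compatible R F"
    and "calg_hom h"
  shows "map_mat h (leg12 (R ** F)) **
           (map_mat h (leg23 F ** leg12 F) ** leg1 A **
            map_mat h (leg12 (matrix_inv F) ** leg23 (matrix_inv F)))
       = (map_mat h (leg23 F ** leg12 F) ** leg1 A **
            map_mat h (leg12 (matrix_inv F) ** leg23 (matrix_inv F)))
         ** map_mat h (leg12 (R ** F))"
proof -
  define P where "P = leg23 F ** leg12 F"
  define Q where "Q = leg12 (matrix_inv F) ** leg23 (matrix_inv F)"
  define L12 where "L12 = leg12 (R ** F)"
  define L23 where "L23 = leg23 (R ** F)"
  have inv: "F ** matrix_inv F = mat 1" "matrix_inv F ** F = mat 1"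
    using assms(2) inv_props unfolding braiding_def by blast+
  have br: "leg12 F ** leg23 F ** leg12 F = leg23 F ** leg12 F ** leg23 F"
    using assms(2) unfolding braiding_def by blast
  have cp: "leg12 R ** leg23 F ** leg12 F = leg23 F ** leg12 F ** leg23 R"
    using assms(3) unfolding compatible_def by blast
  have PQ: "P ** Q = mat 1"
  proof -
    have "P ** Q = leg23 F ** (leg12 F ** leg12 (matrix_inv F)) ** leg23 (matrix_inv F)"
      unfolding P_def Q_def by (simp add: matrix_mul_assoc)
    also have "\<dots> = mat 1"
      by (simp add: leg12_mul[symmetric] leg23_mul[symmetric] inv leg12_one leg23_one)
    finally show ?thesis .
  qed
  have QP: "Q ** P = mat 1"
  proof -
    have "Q ** P = leg12 (matrix_inv F) ** (leg23 (matrix_inv F) ** leg23 F) ** leg12 F"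
      unfolding P_def Q_def by (simp add: matrix_mul_assoc)
    also have "\<dots> = mat 1"
      by (simp add: leg12_mul[symmetric] leg23_mul[symmetric] inv leg12_one leg23_one)
    finally show ?thesis .
  qed
  have key: "L12 ** P = P ** L23"
  proof -
    have "L12 ** P = leg12 R ** (leg12 F ** leg23 F ** leg12 F)"
      unfolding L12_def P_def by (simp add: leg12_mul matrix_mul_assoc)
    also have "\<dots> = leg12 R ** leg23 F ** leg12 F ** leg23 F"
      by (simp add: br matrix_mul_assoc)
    also have "\<dots> = leg23 F ** leg12 F ** leg23 R ** leg23 F"
      by (simp add: cp)
    also have "\<dots> = P ** L23"
      unfolding L23_def P_def by (simp add: leg23_mul matrix_mul_assoc)
    finally show ?thesis .
  qed
  have key2: "L23 ** Q = Q ** L12"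
  proof -
    have "L23 ** Q = Q ** P ** L23 ** Q" by (simp add: QP)
    also have "\<dots> = Q ** (L12 ** P) ** Q" by (simp add: key matrix_mul_assoc)
    also have "\<dots> = Q ** L12" by (simp add: matrix_mul_assoc[symmetric] PQ)
    finally show ?thesis .
  qed
  note mm = map_mul[OF assms(4)]
  have c: "map_mat h L23 ** leg1 A = leg1 A ** map_mat h L23"
    unfolding L23_def by (rule comm_leg1[OF assms(4)])
  have "map_mat h L12 ** (map_mat h P ** leg1 A ** map_mat h Q)
      = map_mat h (L12 ** P) ** leg1 A ** map_mat h Q"
    by (simp add: mm matrix_mul_assoc)
  also have "\<dots> = map_mat h P ** (map_mat h L23 ** leg1 A) ** map_mat h Q"
    by (simp add: key mm matrix_mul_assoc)
  also have "\<dots> = map_mat h P ** leg1 A ** map_mat h (L23 ** Q)"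
    by (simp add: c mm matrix_mul_assoc)
  also have "\<dots> = (map_mat h P ** leg1 A ** map_mat h Q) ** map_mat h L12"
    by (simp add: key2 mm matrix_mul_assoc)
  finally show ?thesis unfolding P_def Q_def L12_def .
qed
end
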